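(* Let $G$ be a finite digraph without sources, and suppose its vertices can be ordered as $v_1,\dots,v_n$ so that for all $i<j$, if $v_jv_i\in E(G)$ then also $v_iv_j\in E(G)$. Then $G$ has a quasi-kernel with at most $n/2$ vertices.
   Context: Digraphs are finite, without loops and without multiple edges in the same direction; anti-parallel edges are allowed. An edge $uv$ goes from $u$ to $v$. For $V'\subseteq V(G)$, $\Gamma^+(V')$ is the set of out-neighbours of vertices of $V'$, $\Gamma^+_1(V')=V'\cup\Gamma^+(V')$ and $\Gamma^+_2(V')=V'\cup\Gamma^+(V')\cup\Gamma^+(\Gamma^+(V'))$. A source is a vertex of in-degree $0$. A quasi-kernel of $G$ is an independent set $Q\subseteq V(G)$ with $\Gamma^+_2(Q)=V(G)$. *)

theory Defs
  imports Main
begin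

text \<open>Loops are excluded; multiple edges are
  impossible by construction; anti-parallel edges are allowed.\<close>

definition digraph :: "'a set \<Rightarrow> ('a \<times> 'a) set \<Rightarrow> bool" where
  "digraph V E \<longleftrightarrow> finite V \<and> E \<subseteq> V \<times> V \<and> (\<forall>v. (v, v) \<notin> E)"

definition out_nbhd :: "('a \<times> 'a) set \<Rightarrow> 'a set \<Rightarrow> 'a set" where
  "out_nbhd E S = {v. \<exists>u\<in>S. (u, v) \<in> E}"

definition out_nbhd1 :: "('a \<times> 'a) set \<Rightarrow> 'a set \<Rightarrow> 'a set" where
  "out_nbhd1 E S = S \<union> out_nbhd E S"

definition out_nbhd2 :: "('a \<times> 'a) set \<Rightarrow> 'a set \<Rightarrow> 'a set" where
  "out_nbhd2 E S = S \<union> out_nbhd E S \<union> out_nbhd E (out_nbhd E S)"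

definition is_source :: "'a set \<Rightarrow> ('a \<times> 'a) set \<Rightarrow> 'a \<Rightarrow> bool" where
  "is_source V E v \<longleftrightarrow> v \<in> V \<and> (\<forall>u. (u, v) \<notin> E)"

definition independent :: "('a \<times> 'a) set \<Rightarrow> 'a set \<Rightarrow> bool" where
  "independent E S \<longleftrightarrow> (\<forall>u\<in>S. \<forall>v\<in>S. (u, v) \<notin> E)"

definition quasi_kernel :: "'a set \<Rightarrow> ('a \<times> 'a) set \<Rightarrow> 'a set \<Rightarrow> bool" where
  "quasi_kernel V E Q \<longleftrightarrow> Q \<subseteq> V \<and> independent E Q \<and> out_nbhd2 E Q = V"

end

theory Submission
  imports Defs
begin

lemma kernel_exists:
  assumes "\<forall>i j. i < j \<and> j < length xs \<longrightarrow> (xs ! j, xs ! i) \<in> E \<longrightarrow> (xs ! i, xs ! j) \<in> E"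
    and loop: "\<forall>v. (v, v) \<notin> E"
  shows "\<exists>K. K \<subseteq> set xs \<inter> S \<and> independent E K \<and> (\<forall>u \<in> set xs \<inter> S - K. \<exists>k\<in>K. (k,u) \<in> E)"
  using assms(1)
proof (induction xs rule: rev_induct)
  case Nil
  then show ?case by (auto simp: independent_def)
next
  case (snoc x xs)
  have h: "\<forall>i j. i < j \<and> j < length xs \<longrightarrow> (xs ! j, xs ! i) \<in> E \<longrightarrow> (xs ! i, xs ! j) \<in> E"
  proof (intro allI impI)
    fix i j assume a: "i < j \<and> j < length xs" "(xs ! j, xs ! i) \<in> E"
    have p: "i < j \<and> j < length (xs @ [x])" using a(1) by simp
    have e1: "(xs @ [x]) ! i = xs ! i" using a(1) by (simp add: nth_append)
    have e2: "(xs @ [x]) ! j = xs ! j" using a(1) by (simp add: nth_append)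
    have "((xs @ [x]) ! j, (xs @ [x]) ! i) \<in> E" unfolding e1 e2 by (rule a(2))
    with snoc.prems p have "((xs @ [x]) ! i, (xs @ [x]) ! j) \<in> E" by blast
    then show "(xs ! i, xs ! j) \<in> E" unfolding e1 e2 .
  qed
  from snoc.IH[OF h] obtain K where KK: "K \<subseteq> set xs \<inter> S \<and> independent E K \<and>
     (\<forall>u \<in> set xs \<inter> S - K. \<exists>k\<in>K. (k,u) \<in> E)" by (rule exE)
  have K: "K \<subseteq> set xs \<inter> S" "independent E K"
     "\<forall>u \<in> set xs \<inter> S - K. \<exists>k\<in>K. (k,u) \<in> E"
    using conjunct1[OF KK] conjunct1[OF conjunct2[OF KK]] conjunct2[OF conjunct2[OF KK]] .
  have bk: "(k, x) \<in> E" if kin: "k \<in> set xs" and xk: "(x, k) \<in> E" for k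
  proof -
    obtain i where i: "i < length xs" "xs ! i = k" using kin unfolding in_set_conv_nth by blast
    have e1: "(xs @ [x]) ! i = k" using i by (simp add: nth_append)
    have e2: "(xs @ [x]) ! length xs = x" by simp
    have p: "i < length xs \<and> length xs < length (xs @ [x])" using i by simp
    have "((xs @ [x]) ! length xs, (xs @ [x]) ! i) \<in> E" unfolding e1 e2 by (rule xk)
    with snoc.prems p have "((xs @ [x]) ! i, (xs @ [x]) ! length xs) \<in> E" by blast
    then show ?thesis unfolding e1 e2 .
  qed
  show ?case
  proof (cases "x \<notin> S \<or> (\<exists>k\<in>K. (k, x) \<in> E)")
    case True
    have "\<forall>u \<in> set (xs @ [x]) \<inter> S - K. \<exists>k\<in>K. (k,u) \<in> E"
    proof
      fix u assume u: "u \<in> set (xs @ [x]) \<inter> S - K"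
      show "\<exists>k\<in>K. (k,u) \<in> E"
      proof (cases "u = x")
        case True then show ?thesis using u \<open>x \<notin> S \<or> (\<exists>k\<in>K. (k, x) \<in> E)\<close> by blast
      next
        case False then have "u \<in> set xs \<inter> S - K" using u by simp
        then show ?thesis using K(3) by blast
      qed
    qed
    moreover have "K \<subseteq> set (xs @ [x]) \<inter> S" using K(1) by auto
    ultimately show ?thesis using K(2) by (intro exI[of _ K] conjI)
  next
    case False
    have "independent E (insert x K)"
      unfolding independent_def
    proof (intro ballI)
      fix u v assume u: "u \<in> insert x K" and v: "v \<in> insert x K"
      show "(u, v) \<notin> E"
      proof (cases "u = x")
        case True
        show ?thesis
        proof (cases "v = x")
          case True then show ?thesis using \<open>u = x\<close> loop by simp
        next
          case False then have "v \<in> K" using v by simp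
          then show ?thesis using \<open>u = x\<close> bk[of v] K(1) \<open>\<not> (x \<notin> S \<or> (\<exists>k\<in>K. (k, x) \<in> E))\<close> by blast
        qed
      next
        case False then have "u \<in> K" using u by simp
        show ?thesis
        proof (cases "v = x")
          case True then show ?thesis using \<open>u \<in> K\<close> \<open>\<not> (x \<notin> S \<or> (\<exists>k\<in>K. (k, x) \<in> E))\<close> by blast
        next
          case False then have "v \<in> K" using v by simp
          then show ?thesis using \<open>u \<in> K\<close> K(2) unfolding independent_def by blast
        qed
      qed
    qed
    moreover have "\<forall>u \<in> set (xs @ [x]) \<inter> S - insert x K. \<exists>k\<in>insert x K. (k,u) \<in> E"
    proof
      fix u assume u: "u \<in> set (xs @ [x]) \<inter> S - insert x K"
      then have "u \<in> set xs \<inter> S - K" by auto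
      then show "\<exists>k\<in>insert x K. (k,u) \<in> E" using K(3) by blast
    qed
    moreover have "insert x K \<subseteq> set (xs @ [x]) \<inter> S" using K(1) False by auto
    ultimately show ?thesis by (intro exI[of _ "insert x K"] conjI)
  qed
qed

theorem mainTheorem1:
  fixes V :: "'a set" and E :: "('a \<times> 'a) set" and vs :: "'a list"
  assumes "digraph V E"
    and "\<forall>v\<in>V. \<not> is_source V E v"
    and "distinct vs" and "set vs = V"
    and "\<forall>i j. i < j \<and> j < length vs \<longrightarrow> (vs ! j, vs ! i) \<in> E \<longrightarrow> (vs ! i, vs ! j) \<in> E"
  shows "\<exists>Q. quasi_kernel V E Q \<and> 2 * card Q \<le> card V"
proof -
  have fin: "finite V" and sub: "E \<subseteq> V \<times> V" and loop: "\<forall>v. (v, v) \<notin> E"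
    using assms(1) by (auto simp: digraph_def)
  have sV: "set vs \<inter> V = V" using assms(4) by simp
  obtain K where KK: "K \<subseteq> V \<and> independent E K \<and> (\<forall>u \<in> V - K. \<exists>k\<in>K. (k,u) \<in> E)"
    using kernel_exists[OF assms(5) loop, of V] unfolding sV by (rule exE)
  have K: "K \<subseteq> V" "independent E K" "\<forall>u \<in> V - K. \<exists>k\<in>K. (k,u) \<in> E"
    using conjunct1[OF KK] conjunct1[OF conjunct2[OF KK]] conjunct2[OF conjunct2[OF KK]] .
  have sV2: "set vs \<inter> (V - K) = V - K" using assms(4) by blast
  obtain K2 where KK2: "K2 \<subseteq> V - K \<and> independent E K2 \<and> (\<forall>u \<in> V - K - K2. \<exists>k\<in>K2. (k,u) \<in> E)"
    using kernel_exists[OF assms(5) loop, of "V - K"] unfolding sV2 by (rule exE)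
  have K2: "K2 \<subseteq> V - K" "independent E K2" "\<forall>u \<in> V - K - K2. \<exists>k\<in>K2. (k,u) \<in> E"
    using conjunct1[OF KK2] conjunct1[OF conjunct2[OF KK2]] conjunct2[OF conjunct2[OF KK2]] .
  have qk1: "quasi_kernel V E K"
    unfolding quasi_kernel_def out_nbhd2_def out_nbhd_def using K sub by auto
  have inK: "\<exists>u\<in>V - K. (u, k) \<in> E" if "k \<in> K" for k
  proof -
    from assms(2) that K(1) obtain u where "(u, k) \<in> E" by (auto simp: is_source_def)
    then show ?thesis using K(2) that sub unfolding independent_def by blast
  qed
  have "V \<subseteq> out_nbhd2 E K2"
  proof
    fix v assume v: "v \<in> V"
    show "v \<in> out_nbhd2 E K2"
    proof (cases "v \<in> K")
      case True
      then obtain u where u: "u \<in> V - K" "(u, v) \<in> E" using inK by blast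
      show ?thesis
      proof (cases "u \<in> K2")
        case True then show ?thesis using u unfolding out_nbhd2_def out_nbhd_def by blast
      next
        case False
        then obtain k where "k \<in> K2" "(k, u) \<in> E" using K2(3) u by blast
        then show ?thesis using u unfolding out_nbhd2_def out_nbhd_def by blast
      qed
    next
      case False
      then show ?thesis using K2(3) v unfolding out_nbhd2_def out_nbhd_def by blast
    qed
  qed
  moreover have "out_nbhd2 E K2 \<subseteq> V"
    using K2(1) sub unfolding out_nbhd2_def out_nbhd_def by auto
  ultimately have qk2: "quasi_kernel V E K2"
    unfolding quasi_kernel_def using K2 by auto
  have c: "card K + card (V - K) = card V"
    using K(1) fin by (metis card_Diff_subset finite_subset le_add_diff_inverse card_mono)
  have "card K2 \<le> card (V - K)" using K2(1) fin by (simp add: card_mono)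
  show ?thesis
  proof (cases "2 * card K \<le> card V")
    case True then show ?thesis using qk1 by blast
  next
    case False
    then have "2 * card K2 \<le> card V" using c \<open>card K2 \<le> card (V - K)\<close> by linarith
    then show ?thesis using qk2 by blast
  qed
qed

end
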